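(* Let $P$ be a definite program, $M_0$ the ``vanilla'' meta-interpreter and $Q\in B^E_P$ an atomic query. Then: (1) for every $A\in \mathrm{Call}(P,Q)$ there exists $\mathit{solve}(A')\in \mathrm{Call}(M_0\cup \mathit{ce}(P),\mathit{solve}(Q))$ such that $A$ and $A'$ are variants; (2) for every $\mathit{solve}(A)\in \mathrm{Call}(M_0\cup \mathit{ce}(P),\mathit{solve}(Q))$ with $A\in B^E_P$ there exists $A'\in\mathrm{Call}(P,Q)$ such that $A$ and $A'$ are variants.
   Context: Logic programs are definite; a query is a finite sequence of atoms; derivations use the leftmost selection rule (LD-derivations; the LD-tree of $P\cup\{Q\}$ is the SLD-tree under Prolog's left-to-right selection rule). $B^E_P$ (the extended Herbrand base) is the set of atoms of the language of $P$ taken modulo variance. For a program $P$ and a set of queries $S$, the call set $\mathrm{Call}(P,S)$ is the set of atoms $A$ such that a variant of $A$ is a selected atom in some branch of the LD-tree of $P\cup\{Q\}$ for some $Q\in S$; $\mathrm{Call}(P,Q)=\mathrm{Call}(P,\{Q\})$. Clause encoding: a clause body $B_1,\dots,B_n$ ($n\ge1$) is represented as the term $(B_1,(B_2,\dots,B_n))$ built with a binary functor $,/2$ (for $n=1$ just $B_1$), and an empty body by the constant $\mathit{true}$. The clause-encoding $\mathit{ce}(P)$ is the set of facts $\mathit{clause}(H,B)$, one for each clause $H\leftarrow B$ of $P$. The symbols $,/2$, $\mathit{clause}$, $\mathit{solve}$ do not occur in the language of $P$. The ``vanilla'' meta-interpreter $M_0$ is the program $\mathit{solve}(\mathit{true}).$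 $\mathit{solve}((A,B))\leftarrow \mathit{solve}(A),\mathit{solve}(B).$ $\mathit{solve}(H)\leftarrow \mathit{clause}(H,B),\mathit{solve}(B).$ *)

theory Defs
  imports Main
begin

text \<open>Symbols: the user symbols of the program P (Usr f) together with the
reserved symbols of the meta-level encoding: ,/2, true, clause, solve.\<close>
datatype 'f sym = Usr 'f | Comma | TrueS | ClauseS | SolveS

datatype ('f, 'v) trm = Var 'v | Fn 'f "('f, 'v) trm list"

type_synonym ('f, 'v) subst = "'v \<Rightarrow> ('f, 'v) trm"

fun subst_apply :: "('f, 'v) trm \<Rightarrow> ('f, 'v) subst \<Rightarrow> ('f, 'v) trm" (infixl "\<cdot>" 67) where
  "Var x \<cdot> \<sigma> = \<sigma> x"
| "Fn f ts \<cdot> \<sigma> = Fn f (map (\<lambda>t. t \<cdot> \<sigma>) ts)"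

fun vars :: "('f, 'v) trm \<Rightarrow> 'v set" where
  "vars (Var x) = {x}"
| "vars (Fn f ts) = (\<Union>t\<in>set ts. vars t)"

fun syms :: "('f, 'v) trm \<Rightarrow> ('f \<times> nat) set" where
  "syms (Var x) = {}"
| "syms (Fn f ts) = insert (f, length ts) (\<Union>t\<in>set ts. syms t)"

definition unifier :: "('f, 'v) subst \<Rightarrow> ('f, 'v) trm \<Rightarrow> ('f, 'v) trm \<Rightarrow> bool" where
  "unifier \<sigma> s t \<longleftrightarrow> s \<cdot> \<sigma> = t \<cdot> \<sigma>"

definition mgu :: "('f, 'v) subst \<Rightarrow> ('f, 'v) trm \<Rightarrow> ('f, 'v) trm \<Rightarrow> bool" where
  "mgu \<sigma> s t \<longleftrightarrow> unifier \<sigma> s t \<and>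
     (\<forall>\<tau>. unifier \<tau> s t \<longrightarrow> (\<exists>\<delta>. \<forall>x. \<tau> x = \<sigma> x \<cdot> \<delta>))"

definition variant :: "('f, 'v) trm \<Rightarrow> ('f, 'v) trm \<Rightarrow> bool" where
  "variant s t \<longleftrightarrow> (\<exists>\<rho>. bij \<rho> \<and> s \<cdot> (Var \<circ> \<rho>) = t)"

text \<open>A clause H <- B1,...,Bn is a pair (H, [B1,...,Bn]); a query is a list of atoms.\<close>
type_synonym ('f, 'v) clause = "('f, 'v) trm \<times> ('f, 'v) trm list"
type_synonym ('f, 'v) program = "('f, 'v) clause set"

definition clause_atoms :: "('f, 'v) clause \<Rightarrow> ('f, 'v) trm set" where
  "clause_atoms c = insert (fst c) (set (snd c))"

definition vars_list :: "('f, 'v) trm list \<Rightarrow> 'v set" where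
  "vars_list As = (\<Union>A\<in>set As. vars A)"

definition vars_clause :: "('f, 'v) clause \<Rightarrow> 'v set" where
  "vars_clause c = vars (fst c) \<union> vars_list (snd c)"

definition rename_clause :: "('v \<Rightarrow> 'v) \<Rightarrow> ('f, 'v) clause \<Rightarrow> ('f, 'v) clause" where
  "rename_clause \<rho> c = (fst c \<cdot> (Var \<circ> \<rho>), map (\<lambda>B. B \<cdot> (Var \<circ> \<rho>)) (snd c))"

definition user_atom :: "('f sym, 'v) trm \<Rightarrow> bool" where
  "user_atom A \<longleftrightarrow> (\<exists>p ts. A = Fn p ts) \<and> fst ` syms A \<subseteq> range Usr"

definition definite_program :: "('f sym, 'v) program \<Rightarrow> bool" where
  "definite_program P \<longleftrightarrow> finite P \<and> (\<forall>c\<in>P. \<forall>A\<in>clause_atoms c. user_atom A)"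

fun pred_of :: "('f, 'v) trm \<Rightarrow> ('f \<times> nat) set" where
  "pred_of (Var x) = {}"
| "pred_of (Fn p ts) = {(p, length ts)}"

fun arg_syms :: "('f, 'v) trm \<Rightarrow> ('f \<times> nat) set" where
  "arg_syms (Var x) = {}"
| "arg_syms (Fn p ts) = (\<Union>t\<in>set ts. syms t)"

definition preds :: "('f, 'v) program \<Rightarrow> ('f \<times> nat) set" where
  "preds P = (\<Union>c\<in>P. \<Union>A\<in>clause_atoms c. pred_of A)"

definition funs :: "('f, 'v) program \<Rightarrow> ('f \<times> nat) set" where
  "funs P = (\<Union>c\<in>P. \<Union>A\<in>clause_atoms c. arg_syms A)"

definition BE :: "('f, 'v) program \<Rightarrow> ('f, 'v) trm set" where
  "BE P = {A. (\<exists>p ts. A = Fn p ts \<and> (p, length ts) \<in> preds P \<and>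
                   (\<forall>t\<in>set ts. syms t \<subseteq> funs P))}"

definition ld_step :: "('f, 'v) program \<Rightarrow> ('f, 'v) trm list \<Rightarrow> ('f, 'v) trm list \<Rightarrow> bool" where
  "ld_step P Q R \<longleftrightarrow> (\<exists>A Bs c \<rho> \<theta>. Q = A # Bs \<and> c \<in> P \<and> bij \<rho> \<and>
      vars_clause (rename_clause \<rho> c) \<inter> vars_list Q = {} \<and>
      mgu \<theta> A (fst (rename_clause \<rho> c)) \<and>
      R = map (\<lambda>B. B \<cdot> \<theta>) (snd (rename_clause \<rho> c) @ Bs))"

definition Call :: "('f, 'v) program \<Rightarrow> ('f, 'v) trm list set \<Rightarrow> ('f, 'v) trm set" where
  "Call P S = {A. \<exists>Q\<in>S. \<exists>B Bs. (ld_step P)\<^sup>*\<^sup>* Q (B # Bs) \<and> variant A B}"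

fun enc_body :: "('f sym, 'v) trm list \<Rightarrow> ('f sym, 'v) trm" where
  "enc_body [] = Fn TrueS []"
| "enc_body [B] = B"
| "enc_body (B # Bs) = Fn Comma [B, enc_body Bs]"

definition ce :: "('f sym, 'v) program \<Rightarrow> ('f sym, 'v) program" where
  "ce P = {(Fn ClauseS [fst c, enc_body (snd c)], []) | c. c \<in> P}"

abbreviation solve :: "('f sym, 'v) trm \<Rightarrow> ('f sym, 'v) trm" where
  "solve t \<equiv> Fn SolveS [t]"

definition M0 :: "'v \<Rightarrow> 'v \<Rightarrow> ('f sym, 'v) program" where
  "M0 x y = {(solve (Fn TrueS []), []),
             (solve (Fn Comma [Var x, Var y]), [solve (Var x), solve (Var y)]),
             (solve (Var x), [Fn ClauseS [Var x, Var y], solve (Var y)])}"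

end

theory Submission
  imports Defs
begin

lemma subst_comp: "t \<cdot> \<sigma> \<cdot> \<tau> = t \<cdot> (\<lambda>x. \<sigma> x \<cdot> \<tau>)"
  by (induction t) auto

lemma subst_cong: "(\<forall>x\<in>vars t. \<sigma> x = \<tau> x) \<Longrightarrow> t \<cdot> \<sigma> = t \<cdot> \<tau>"
  by (induction t) auto

lemma subst_Var[simp]: "t \<cdot> Var = t"
  by (induction t) (auto intro: map_idI)

lemma vars_subst: "vars (t \<cdot> \<sigma>) = (\<Union>x\<in>vars t. vars (\<sigma> x))"
  by (induction t) auto

lemma finite_vars[simp]: "finite (vars t)"
  by (induction t) auto

lemma finite_vars_list[simp]: "finite (vars_list L)"
  by (auto simp: vars_list_def)

lemma vars_list_simps[simp]: "vars_list [] = {}" "vars_list (A # L) = vars A \<union> vars_list L"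
  "vars_list (L @ L') = vars_list L \<union> vars_list L'"
  by (auto simp: vars_list_def)

lemma vars_list_map: "vars_list (map (\<lambda>t. t \<cdot> \<sigma>) L) = (\<Union>x\<in>vars_list L. vars (\<sigma> x))"
  by (induction L) (auto simp: vars_subst)

lemma map_subst_cong: "(\<forall>x\<in>vars_list L. \<sigma> x = \<tau> x) \<Longrightarrow> map (\<lambda>t. t \<cdot> \<sigma>) L = map (\<lambda>t. t \<cdot> \<tau>) L"
  by (induction L) (auto intro: subst_cong)

lemma map_subst_comp: "map (\<lambda>t. t \<cdot> \<tau>) (map (\<lambda>t. t \<cdot> \<sigma>) L) = map (\<lambda>t. t \<cdot> (\<lambda>x. \<sigma> x \<cdot> \<tau>)) L"
  by (simp add: subst_comp)

definition sw :: "'v \<Rightarrow> 'v \<Rightarrow> 'v \<Rightarrow> 'v" where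
  "sw a b z = (if z = a then b else if z = b then a else z)"

lemma bij_sw: "bij (sw a b)"
  by (rule o_bij[of "sw a b"]) (auto simp: fun_eq_iff sw_def)

lemma inj_extend:
  fixes f :: "'v \<Rightarrow> 'v"
  assumes "finite W" "inj_on f W"
  shows "\<exists>\<pi>. bij \<pi> \<and> (\<forall>w\<in>W. \<pi> w = f w)"
  using assms
proof (induction W rule: finite_induct)
  case empty
  show ?case using bij_id by blast
next
  case (insert a W)
  have "inj_on f W" using insert(4) by (simp add: inj_on_insert)
  then obtain \<pi> where p: "bij \<pi>" "\<forall>w\<in>W. \<pi> w = f w" using insert(3) by blast
  define \<pi>' where "\<pi>' = sw (\<pi> a) (f a) \<circ> \<pi>"
  have "bij \<pi>'" unfolding \<pi>'_def by (rule bij_comp[OF p(1) bij_sw])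
  moreover have "\<pi>' a = f a" by (simp add: \<pi>'_def sw_def)
  moreover have "\<pi>' w = f w" if "w \<in> W" for w
  proof -
    have "\<pi> w \<noteq> \<pi> a" using p(1) that insert(2) using injD[OF bij_is_inj[OF p(1)]] by blast
    moreover have "f w \<noteq> f a" using insert(4) that insert(2) unfolding inj_on_def by blast
    ultimately show ?thesis using p(2) that unfolding \<pi>'_def sw_def by simp
  qed
  ultimately show ?case by auto
qed

definition uh :: "('f sym, 'v) trm \<Rightarrow> bool" where
  "uh t \<longleftrightarrow> (\<exists>p ts. t = Fn (Usr p) ts)"

fun flat :: "('f sym, 'v) trm \<Rightarrow> ('f sym, 'v) trm list" where
  "flat (Var x) = [Var x]"
| "flat (Fn f ts) = (case (f, ts) of (Comma, [a, b]) \<Rightarrow> flat a @ flat b | (TrueS, []) \<Rightarrow> [] | _ \<Rightarrow> [Fn f ts])"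

inductive good :: "('f sym, 'v) trm \<Rightarrow> bool" where
  gT: "good (Fn TrueS [])"
| gC: "good a \<Longrightarrow> good b \<Longrightarrow> good (Fn Comma [a, b])"
| gU: "good (Fn (Usr p) ts)"

lemma uh_subst: "uh t \<Longrightarrow> uh (t \<cdot> \<sigma>)"
  by (auto simp: uh_def)

lemma uh_flat: "uh t \<Longrightarrow> flat t = [t]"
  by (auto simp: uh_def)

lemma uh_good: "uh t \<Longrightarrow> good t"
  by (auto simp: uh_def intro: gU)

lemma good_subst: "good t \<Longrightarrow> good (t \<cdot> \<sigma>)"
  by (induction rule: good.induct) (auto intro: good.intros)

lemma flat_subst: "good t \<Longrightarrow> flat (t \<cdot> \<sigma>) = map (\<lambda>s. s \<cdot> \<sigma>) (flat t)"
  by (induction rule: good.induct) auto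

lemma vars_good: "good t \<Longrightarrow> vars t = vars_list (flat t)"
  by (induction rule: good.induct) auto

lemma uh_flat_mem: "good t \<Longrightarrow> s \<in> set (flat t) \<Longrightarrow> uh s"
  by (induction rule: good.induct) (auto simp: uh_def)

lemma enc_good: "\<forall>B\<in>set Bs. uh B \<Longrightarrow> good (enc_body Bs) \<and> flat (enc_body Bs) = Bs"
  by (induction Bs rule: enc_body.induct) (auto intro: good.intros simp: uh_good uh_flat)

lemma enc_subst: "enc_body Bs \<cdot> \<sigma> = enc_body (map (\<lambda>t. t \<cdot> \<sigma>) Bs)"
  by (induction Bs rule: enc_body.induct) auto

lemma vars_enc: "vars (enc_body Bs) = vars_list Bs"
  by (induction Bs rule: enc_body.induct) auto

definition FF :: "('f sym, 'v) trm list \<Rightarrow> ('f sym, 'v) trm list" where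
  "FF Gs = concat (map flat Gs)"

lemma FF_simps[simp]: "FF [] = []" "FF (G # Gs) = flat G @ FF Gs"
  by (auto simp: FF_def)

lemma FF_subst: "list_all good Gs \<Longrightarrow> FF (map (\<lambda>t. t \<cdot> \<sigma>) Gs) = map (\<lambda>t. t \<cdot> \<sigma>) (FF Gs)"
  by (induction Gs) (auto simp: flat_subst)

lemma vars_FF: "list_all good Gs \<Longrightarrow> vars_list (map solve Gs) = vars_list (FF Gs)"
  by (induction Gs) (auto simp: vars_good)

lemma good_map_subst: "list_all good Gs \<Longrightarrow> list_all good (map (\<lambda>t. t \<cdot> \<sigma>) Gs)"
  by (induction Gs) (auto simp: good_subst)

lemma map_solve_subst: "map (\<lambda>t. t \<cdot> \<sigma>) (map solve Gs) = map solve (map (\<lambda>t. t \<cdot> \<sigma>) Gs)"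
  by simp

lemma mgu_unif: "mgu \<theta> s t \<Longrightarrow> s \<cdot> \<theta> = t \<cdot> \<theta>"
  by (simp add: mgu_def unifier_def)

lemma mgu_gen: "mgu \<theta> s t \<Longrightarrow> s \<cdot> \<tau> = t \<cdot> \<tau> \<Longrightarrow> \<exists>\<delta>. \<forall>x. \<tau> x = \<theta> x \<cdot> \<delta>"
  by (simp add: mgu_def unifier_def)

lemma var_back: "t \<cdot> \<delta> = Var z \<Longrightarrow> \<exists>w. t = Var w \<and> \<delta> w = Var z"
  by (cases t) auto

lemma renaming_recog:
  fixes \<sigma> :: "('f, 'v) subst"
  assumes "finite V" "\<forall>z\<in>V. \<sigma> z \<cdot> \<delta> = Var z"
  shows "\<exists>\<pi>. bij \<pi> \<and> (\<forall>z\<in>V. \<sigma> z = Var (\<pi> z))"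
proof -
  have "\<forall>z\<in>V. \<exists>w. \<sigma> z = Var w \<and> \<delta> w = Var z"
  proof
    fix z assume "z \<in> V"
    then have "\<sigma> z \<cdot> \<delta> = Var z" using assms(2) by blast
    then show "\<exists>w. \<sigma> z = Var w \<and> \<delta> w = Var z" by (rule var_back)
  qed
  then have "\<exists>f. \<forall>z\<in>V. \<sigma> z = Var (f z) \<and> \<delta> (f z) = Var z" by (rule bchoice)
  then obtain f where f: "\<forall>z\<in>V. \<sigma> z = Var (f z) \<and> \<delta> (f z) = Var z" by blast
  have "inj_on f V"
  proof (rule inj_onI)
    fix a b assume "a \<in> V" "b \<in> V" "f a = f b"
    then have "\<delta> (f a) = \<delta> (f b)" by simp
    then show "a = b" using f \<open>a \<in> V\<close> \<open>b \<in> V\<close> by simp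
  qed
  then obtain \<pi> where p: "bij \<pi>" "\<forall>w\<in>V. \<pi> w = f w" using inj_extend[OF assms(1)] by blast
  show ?thesis using p f by (intro exI[of _ \<pi>]) simp
qed


lemma ren_comp: "t \<cdot> (Var \<circ> \<rho>) \<cdot> (Var \<circ> \<pi>) = t \<cdot> (Var \<circ> (\<pi> \<circ> \<rho>))"
  by (simp add: subst_comp comp_def)

lemma ren_comp'[simp]: "t \<cdot> (\<lambda>a. Var (\<rho> a)) \<cdot> (\<lambda>a. Var (\<pi> a)) = t \<cdot> (\<lambda>a. Var (\<pi> (\<rho> a)))"
  by (simp add: subst_comp)

lemma vars_ren: "vars (t \<cdot> (Var \<circ> \<pi>)) = \<pi> ` vars t"
  by (auto simp: vars_subst)

lemma vars_list_ren: "vars_list (map (\<lambda>t. t \<cdot> (Var \<circ> \<pi>)) L) = \<pi> ` vars_list L"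
  by (auto simp: vars_list_map)

lemma ld_rename:
  assumes "ld_step P Qo R" "bij \<pi>"
  shows "ld_step P (map (\<lambda>t. t \<cdot> (Var \<circ> \<pi>)) Qo) (map (\<lambda>t. t \<cdot> (Var \<circ> \<pi>)) R)"
proof -
  obtain A Bs c \<rho> \<theta> where Qo: "Qo = A # Bs" and c: "c \<in> P" and r: "bij \<rho>"
    and disj: "vars_clause (rename_clause \<rho> c) \<inter> vars_list Qo = {}"
    and m: "mgu \<theta> A (fst (rename_clause \<rho> c))"
    and R: "R = map (\<lambda>B. B \<cdot> \<theta>) (snd (rename_clause \<rho> c) @ Bs)"
    using assms(1) unfolding ld_step_def by blast
  define H where "H = fst (rename_clause \<rho> c)"
  define Bd where "Bd = snd (rename_clause \<rho> c)"
  define \<theta>2 where "\<theta>2 z = \<theta> (inv \<pi> z) \<cdot> (Var \<circ> \<pi>)" for z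
  have injp: "inj \<pi>" using assms(2) bij_is_inj by blast
  have surjp: "surj \<pi>" using assms(2) bij_is_surj by blast
  have rc: "rename_clause (\<pi> \<circ> \<rho>) c = (H \<cdot> (Var \<circ> \<pi>), map (\<lambda>t. t \<cdot> (Var \<circ> \<pi>)) Bd)"
    by (simp add: rename_clause_def ren_comp H_def Bd_def)
  have vc: "vars_clause (rename_clause \<rho> c) = vars H \<union> vars_list Bd"
    by (simp add: vars_clause_def H_def Bd_def)
  have vc2: "vars_clause (rename_clause (\<pi> \<circ> \<rho>) c) = \<pi> ` (vars H \<union> vars_list Bd)"
    by (simp add: rc vars_clause_def vars_ren vars_list_ren image_Un)
  have disj2: "vars_clause (rename_clause (\<pi> \<circ> \<rho>) c) \<inter> vars_list (map (\<lambda>t. t \<cdot> (Var \<circ> \<pi>)) Qo) = {}"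
    unfolding vc2 vars_list_ren using disj vc injp by (simp add: image_Int[symmetric])
  have key: "t \<cdot> (Var \<circ> \<pi>) \<cdot> \<theta>2 = t \<cdot> \<theta> \<cdot> (Var \<circ> \<pi>)" for t
    by (simp add: subst_comp \<theta>2_def injp)
  have m2: "mgu \<theta>2 (A \<cdot> (Var \<circ> \<pi>)) (H \<cdot> (Var \<circ> \<pi>))"
    unfolding mgu_def unifier_def
  proof (intro conjI allI impI)
    show "A \<cdot> (Var \<circ> \<pi>) \<cdot> \<theta>2 = H \<cdot> (Var \<circ> \<pi>) \<cdot> \<theta>2"
      using mgu_unif[OF m] by (simp add: key H_def)
  next
    fix \<tau> assume u: "A \<cdot> (Var \<circ> \<pi>) \<cdot> \<tau> = H \<cdot> (Var \<circ> \<pi>) \<cdot> \<tau>"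
    have "A \<cdot> (\<lambda>x. \<tau> (\<pi> x)) = H \<cdot> (\<lambda>x. \<tau> (\<pi> x))" using u by (simp add: subst_comp)
    then obtain \<delta> where d: "\<forall>x. \<tau> (\<pi> x) = \<theta> x \<cdot> \<delta>" using mgu_gen[OF m] H_def by blast
    have "\<tau> z = \<theta>2 z \<cdot> (\<delta> \<circ> inv \<pi>)" for z
    proof -
      have "\<theta>2 z \<cdot> (\<delta> \<circ> inv \<pi>) = \<theta> (inv \<pi> z) \<cdot> (\<lambda>x. (\<delta> \<circ> inv \<pi>) (\<pi> x))"
        by (simp add: \<theta>2_def subst_comp)
      also have "\<dots> = \<theta> (inv \<pi> z) \<cdot> \<delta>" by (simp add: injp)
      also have "\<dots> = \<tau> (\<pi> (inv \<pi> z))" using d by simp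
      also have "\<dots> = \<tau> z" using surjp by (simp add: surj_f_inv_f)
      finally show ?thesis by simp
    qed
    then show "\<exists>\<delta>. \<forall>x. \<tau> x = \<theta>2 x \<cdot> \<delta>" by blast
  qed
  have R2: "map (\<lambda>t. t \<cdot> (Var \<circ> \<pi>)) R = map (\<lambda>B. B \<cdot> \<theta>2) (snd (rename_clause (\<pi> \<circ> \<rho>) c) @ map (\<lambda>t. t \<cdot> (Var \<circ> \<pi>)) Bs)"
    by (simp add: R rc key Bd_def)
  show ?thesis unfolding ld_step_def
    apply (rule exI[of _ "A \<cdot> (Var \<circ> \<pi>)"])
    apply (rule exI[of _ "map (\<lambda>t. t \<cdot> (Var \<circ> \<pi>)) Bs"])
    apply (rule exI[of _ c])
    apply (rule exI[of _ "\<pi> \<circ> \<rho>"])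
    apply (rule exI[of _ \<theta>2])
    using Qo c bij_comp[OF r assms(2)] disj2 m2 R2 rc by simp
qed


lemma map_ren_comp: "map (\<lambda>t. t \<cdot> (Var \<circ> \<pi>)) (map (\<lambda>t. t \<cdot> (Var \<circ> \<rho>)) L) = map (\<lambda>t. t \<cdot> (Var \<circ> (\<pi> \<circ> \<rho>))) L"
  by (simp add: comp_def)

definition corr :: "('f, 'v) program \<Rightarrow> ('f, 'v) trm \<Rightarrow> ('f, 'v) trm list \<Rightarrow> bool" where
  "corr P Q L \<longleftrightarrow> (\<exists>Qo \<pi>. (ld_step P)\<^sup>*\<^sup>* [Q] Qo \<and> bij \<pi> \<and> map (\<lambda>t. t \<cdot> (Var \<circ> \<pi>)) L = Qo)"

lemma corr_rename:
  assumes "corr P Q L" "bij \<pi>'"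
  shows "corr P Q (map (\<lambda>t. t \<cdot> (Var \<circ> \<pi>')) L)"
proof -
  obtain Qo \<pi> where q: "(ld_step P)\<^sup>*\<^sup>* [Q] Qo" "bij \<pi>" "map (\<lambda>t. t \<cdot> (Var \<circ> \<pi>)) L = Qo"
    using assms(1) unfolding corr_def by blast
  define \<pi>2 where "\<pi>2 = \<pi> \<circ> inv \<pi>'"
  have b2: "bij \<pi>2" unfolding \<pi>2_def using q(2) assms(2) by (simp add: bij_comp bij_imp_bij_inv)
  have e: "\<pi>2 \<circ> \<pi>' = \<pi>" unfolding \<pi>2_def using assms(2) by (auto simp: fun_eq_iff bij_is_inj)
  have "map (\<lambda>t. t \<cdot> (Var \<circ> \<pi>2)) (map (\<lambda>t. t \<cdot> (Var \<circ> \<pi>')) L) = Qo"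
    using q(3) by (simp only: map_ren_comp e)
  then show ?thesis unfolding corr_def using q(1) b2 by blast
qed

lemma corr_unren:
  assumes "corr P Q (map (\<lambda>t. t \<cdot> (Var \<circ> g)) L)" "bij g"
  shows "corr P Q L"
proof -
  have "corr P Q (map (\<lambda>t. t \<cdot> (Var \<circ> inv g)) (map (\<lambda>t. t \<cdot> (Var \<circ> g)) L))"
    using corr_rename[OF assms(1)] assms(2) bij_imp_bij_inv by blast
  moreover have "map (\<lambda>t. t \<cdot> (Var \<circ> inv g)) (map (\<lambda>t. t \<cdot> (Var \<circ> g)) L) = L"
    using assms(2) by (simp add: comp_def bij_is_inj)
  ultimately show ?thesis by simp
qed

lemma corr_subst:
  assumes "corr P Q L" "\<forall>z\<in>vars_list L. \<sigma> z \<cdot> \<delta> = Var z"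
  shows "corr P Q (map (\<lambda>t. t \<cdot> \<sigma>) L)"
proof -
  obtain \<pi> where p: "bij \<pi>" "\<forall>z\<in>vars_list L. \<sigma> z = Var (\<pi> z)"
    using renaming_recog[OF finite_vars_list assms(2)] by blast
  have eq: "map (\<lambda>t. t \<cdot> \<sigma>) L = map (\<lambda>t. t \<cdot> (Var \<circ> \<pi>)) L"
    using p(2) by (intro map_subst_cong) simp
  show ?thesis unfolding eq by (rule corr_rename[OF assms(1) p(1)])
qed

lemma corr_step:
  assumes "corr P Q L" "ld_step P L R"
  shows "corr P Q R"
proof -
  obtain Qo \<pi> where q: "(ld_step P)\<^sup>*\<^sup>* [Q] Qo" "bij \<pi>" "map (\<lambda>t. t \<cdot> (Var \<circ> \<pi>)) L = Qo"
    using assms(1) unfolding corr_def by blast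
  have "ld_step P Qo (map (\<lambda>t. t \<cdot> (Var \<circ> \<pi>)) R)" using ld_rename[OF assms(2) q(2)] q(3) by simp
  then have "(ld_step P)\<^sup>*\<^sup>* [Q] (map (\<lambda>t. t \<cdot> (Var \<circ> \<pi>)) R)" using q(1) by simp
  then show ?thesis unfolding corr_def using q(2) by blast
qed

lemma corr_inj:
  fixes h :: "'v \<Rightarrow> 'v"
  assumes "corr P Q (map (\<lambda>t. t \<cdot> (Var \<circ> h)) L)" "inj h"
  shows "corr P Q L"
proof -
  obtain g where g: "bij g" "\<forall>w\<in>vars_list L. g w = h w"
    using inj_extend[OF finite_vars_list, of h L] assms(2) inj_on_subset by blast
  have eq: "map (\<lambda>t. t \<cdot> (Var \<circ> h)) L = map (\<lambda>t. t \<cdot> (Var \<circ> g)) L"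
    using g(2) by (intro map_subst_cong) simp
  show ?thesis using corr_unren[OF _ g(1)] assms(1) unfolding eq by blast
qed

lemma inj_not_surj:
  assumes "infinite (UNIV :: 'v set)"
  shows "\<exists>(h :: 'v \<Rightarrow> 'v) u. inj h \<and> u \<notin> range h"
proof -
  obtain f :: "nat \<Rightarrow> 'v" where f: "inj f" using infinite_countable_subset[OF assms] by blast
  define h where "h z = (if z \<in> range f then f (Suc (inv f z)) else z)" for z
  have "inj h"
  proof (rule injI)
    fix a b assume e: "h a = h b"
    show "a = b"
    proof (cases "a \<in> range f"; cases "b \<in> range f")
      assume "a \<in> range f" "b \<in> range f"
      then show ?thesis using e f by (auto simp: h_def inj_eq)
    next
      assume "a \<in> range f" "b \<notin> range f"
      then show ?thesis using e by (auto simp: h_def)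
    next
      assume "a \<notin> range f" "b \<in> range f"
      then show ?thesis using e by (auto simp: h_def)
    next
      assume "a \<notin> range f" "b \<notin> range f"
      then show ?thesis using e by (auto simp: h_def)
    qed
  qed
  moreover have "f 0 \<notin> range h"
  proof
    assume "f 0 \<in> range h"
    then obtain z where z: "h z = f 0" by auto
    show False
    proof (cases "z \<in> range f")
      case True
      then have "f (Suc (inv f z)) = f 0" using z by (simp add: h_def)
      then show False using f by (simp add: inj_eq)
    next
      case False
      then show False using z by (simp add: h_def)
    qed
  qed
  ultimately show ?thesis by blast
qed

lemma user_atom_uh: "user_atom A \<Longrightarrow> uh (A :: ('f sym, 'v) trm)"
  by (auto simp: user_atom_def uh_def)

lemma prog_uh:
  assumes "definite_program P" "(H, B) \<in> P"
  shows "uh H \<and> (\<forall>b\<in>set B. uh b)"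
proof -
  have "user_atom H" "\<forall>b\<in>set B. user_atom b"
    using assms unfolding definite_program_def clause_atoms_def by force+
  then show ?thesis using user_atom_uh by blast
qed

lemma M0_cases:
  "c \<in> M0 x y \<Longrightarrow> rename_clause \<rho> c = (solve (Fn TrueS []), [])
   \<or> rename_clause \<rho> c = (solve (Fn Comma [Var (\<rho> x), Var (\<rho> y)]), [solve (Var (\<rho> x)), solve (Var (\<rho> y))])
   \<or> rename_clause \<rho> c = (solve (Var (\<rho> x)), [Fn ClauseS [Var (\<rho> x), Var (\<rho> y)], solve (Var (\<rho> y))])"
  by (auto simp: M0_def rename_clause_def)

lemma ce_cases:
  "c \<in> ce P \<Longrightarrow> \<exists>H B. (H, B) \<in> P \<and> rename_clause \<rho> c =
     (Fn ClauseS [H \<cdot> (Var \<circ> \<rho>), enc_body (map (\<lambda>t. t \<cdot> (Var \<circ> \<rho>)) B)], [])"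
  unfolding ce_def rename_clause_def by (auto simp: enc_subst) blast

definition DD :: "('f sym, 'v) trm list \<Rightarrow> bool" where
  "DD M \<longleftrightarrow> (\<exists>t w rest. M = Fn ClauseS [t, w] # rest \<and> (t = Fn TrueS [] \<or> (\<exists>ts. t = Fn Comma ts)))"

lemma DD_step:
  assumes "DD M" "definite_program P" "ld_step (M0 x y \<union> ce P) M R"
  shows False
proof -
  obtain t w rest where M: "M = Fn ClauseS [t, w] # rest" and t: "t = Fn TrueS [] \<or> (\<exists>ts. t = Fn Comma ts)"
    using assms(1) unfolding DD_def by blast
  obtain A Bs c \<rho> \<theta> where MA: "M = A # Bs" and c: "c \<in> M0 x y \<union> ce P"
    and m: "mgu \<theta> A (fst (rename_clause \<rho> c))"
    using assms(3) unfolding ld_step_def by blast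
  have u: "Fn ClauseS [t, w] \<cdot> \<theta> = fst (rename_clause \<rho> c) \<cdot> \<theta>" using mgu_unif[OF m] M MA by simp
  show False
  proof (cases "c \<in> M0 x y")
    case True
    then show False using M0_cases[OF True, of \<rho>] u by auto
  next
    case False
    then have "c \<in> ce P" using c by blast
    then obtain H B where hb: "(H, B) \<in> P" and rc: "rename_clause \<rho> c =
     (Fn ClauseS [H \<cdot> (Var \<circ> \<rho>), enc_body (map (\<lambda>t. t \<cdot> (Var \<circ> \<rho>)) B)], [])"
      using ce_cases by blast
    obtain p ts where H: "H = Fn (Usr p) ts" using prog_uh[OF assms(2) hb] unfolding uh_def by blast
    have "t \<cdot> \<theta> = H \<cdot> (Var \<circ> \<rho>) \<cdot> \<theta>" using u rc by simp
    then show False using t H by auto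
  qed
qed


definition SS :: "('f sym, 'v) program \<Rightarrow> ('f sym, 'v) trm \<Rightarrow> ('f sym, 'v) trm list \<Rightarrow> bool" where
  "SS P Q M \<longleftrightarrow> (\<exists>Gs. M = map solve Gs \<and> list_all good Gs \<and> corr P Q (FF Gs))"

definition CC :: "('f sym, 'v) program \<Rightarrow> ('f sym, 'v) trm \<Rightarrow> ('f sym, 'v) trm list \<Rightarrow> bool" where
  "CC P Q M \<longleftrightarrow> (\<exists>A b Gs. M = Fn ClauseS [A, Var b] # solve (Var b) # map solve Gs \<and> uh A
      \<and> list_all good Gs \<and> b \<notin> vars A \<and> b \<notin> vars_list (FF Gs) \<and> corr P Q (A # FF Gs))"

lemma good_cases: "good G \<Longrightarrow> G = Fn TrueS [] \<or> (\<exists>X Y. G = Fn Comma [X, Y] \<and> good X \<and> good Y) \<or> uh G"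
  by (erule good.cases) (auto simp: uh_def)

lemma fresh_after:
  assumes "\<forall>z\<in>V. \<theta> z \<cdot> \<delta> = Var z" "\<delta> b' = Var b" "b \<notin> V"
  shows "b' \<notin> (\<Union>z\<in>V. vars (\<theta> z))"
proof
  assume "b' \<in> (\<Union>z\<in>V. vars (\<theta> z))"
  then obtain z where z: "z \<in> V" "b' \<in> vars (\<theta> z)" by blast
  have "\<theta> z \<cdot> \<delta> = Var z" using assms(1) z(1) by blast
  from var_back[OF this] obtain w where w: "\<theta> z = Var w" "\<delta> w = Var z" by blast
  have "w = b'" using w(1) z(2) by simp
  then have "z = b" using w(2) assms(2) by simp
  then show False using z(1) assms(3) by simp
qed

lemma subst_id_outside: "(\<forall>z\<in>vars t. \<sigma> z = Var z) \<Longrightarrow> t \<cdot> \<sigma> = t"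
  using subst_cong[of t \<sigma> Var] by simp

lemma SS_step:
  assumes "SS P Q M" "x \<noteq> y" "ld_step (M0 x y \<union> ce P) M R"
  shows "SS P Q R \<or> CC P Q R \<or> DD R"
proof -
  obtain Gs where M: "M = map solve Gs" and g: "list_all good Gs" and cr: "corr P Q (FF Gs)"
    using assms(1) unfolding SS_def by blast
  obtain A Bs c \<rho> \<theta> where MA: "M = A # Bs" and c: "c \<in> M0 x y \<union> ce P" and r: "bij \<rho>"
    and disj: "vars_clause (rename_clause \<rho> c) \<inter> vars_list M = {}"
    and m: "mgu \<theta> A (fst (rename_clause \<rho> c))"
    and R: "R = map (\<lambda>B. B \<cdot> \<theta>) (snd (rename_clause \<rho> c) @ Bs)"
    using assms(3) unfolding ld_step_def by blast
  obtain G1 rest where Gs: "Gs = G1 # rest" using M MA by (cases Gs) auto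
  have A: "A = solve G1" and Bs: "Bs = map solve rest" using M MA Gs by auto
  have g1: "good G1" and gr: "list_all good rest" using g Gs by auto
  have vM: "vars_list M = vars_list (FF Gs)" using vars_FF[OF g] M by simp
  have vM2: "vars_list (FF Gs) = vars G1 \<union> vars_list (FF rest)" using Gs g1 by (simp add: vars_good)
  have u: "solve G1 \<cdot> \<theta> = fst (rename_clause \<rho> c) \<cdot> \<theta>" using mgu_unif[OF m] A by simp
  have cM0: "c \<in> M0 x y"
  proof (rule ccontr)
    assume "c \<notin> M0 x y"
    then have "c \<in> ce P" using c by blast
    then obtain H B where rc: "rename_clause \<rho> c =
     (Fn ClauseS [H \<cdot> (Var \<circ> \<rho>), enc_body (map (\<lambda>t. t \<cdot> (Var \<circ> \<rho>)) B)], [])"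
      using ce_cases by blast
    show False using u rc by simp
  qed
  have ab: "\<rho> x \<noteq> \<rho> y" using injD[OF bij_is_inj[OF r]] assms(2) by blast
  define a where "a = \<rho> x"
  define b where "b = \<rho> y"
  have ab': "a \<noteq> b" using ab by (simp add: a_def b_def)
  consider (c1) "rename_clause \<rho> c = (solve (Fn TrueS []), [])"
    | (c2) "rename_clause \<rho> c = (solve (Fn Comma [Var a, Var b]), [solve (Var a), solve (Var b)])"
    | (c3) "rename_clause \<rho> c = (solve (Var a), [Fn ClauseS [Var a, Var b], solve (Var b)])"
    using M0_cases[OF cM0, of \<rho>] unfolding a_def b_def by blast
  then show ?thesis
  proof cases
    case c1
    have G1t: "G1 \<cdot> \<theta> = Fn TrueS []" using u c1 by simp
    have G1: "G1 = Fn TrueS []" using good_cases[OF g1] G1t by (auto simp: uh_def)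
    have "A \<cdot> Var = fst (rename_clause \<rho> c) \<cdot> Var" using A G1 c1 by simp
    then obtain \<delta> where d: "\<forall>z. Var z = \<theta> z \<cdot> \<delta>" using mgu_gen[OF m] by blast
    have FF: "FF Gs = FF rest" using Gs G1 by simp
    have "R = map solve (map (\<lambda>t. t \<cdot> \<theta>) rest)" using R c1 Bs by simp
    moreover have "corr P Q (FF (map (\<lambda>t. t \<cdot> \<theta>) rest))"
      unfolding FF_subst[OF gr] using corr_subst[OF cr[unfolded FF], of \<theta> \<delta>] d by metis
    ultimately have "SS P Q R" unfolding SS_def using good_map_subst[OF gr] by blast
    then show ?thesis by blast
  next
    case c2
    have vc: "vars_clause (rename_clause \<rho> c) = {a, b}" using c2 by (auto simp: vars_clause_def)
    have nab: "a \<notin> vars_list (FF Gs)" "b \<notin> vars_list (FF Gs)" using disj vc vM by auto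
    have G1t: "G1 \<cdot> \<theta> = Fn Comma [\<theta> a, \<theta> b]" using u c2 by simp
    obtain X Y where G1: "G1 = Fn Comma [X, Y]" and gX: "good X" and gY: "good Y"
      using good_cases[OF g1] G1t by (auto simp: uh_def)
    have XY: "X \<cdot> \<theta> = \<theta> a" "Y \<cdot> \<theta> = \<theta> b" using G1t G1 by auto
    define \<sigma>0 where "\<sigma>0 = Var(a := X, b := Y)"
    have G1s: "G1 \<cdot> \<sigma>0 = G1"
      using nab vM2 by (intro subst_id_outside) (auto simp: \<sigma>0_def)
    have "A \<cdot> \<sigma>0 = fst (rename_clause \<rho> c) \<cdot> \<sigma>0"
      using A G1s c2 ab' G1 by (simp add: \<sigma>0_def)
    then obtain \<delta> where d: "\<forall>z. \<sigma>0 z = \<theta> z \<cdot> \<delta>" using mgu_gen[OF m] by blast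
    have d2: "\<forall>z\<in>vars_list (FF Gs). \<theta> z \<cdot> \<delta> = Var z"
    proof
      fix z assume "z \<in> vars_list (FF Gs)"
      then have "z \<noteq> a" "z \<noteq> b" using nab by auto
      then show "\<theta> z \<cdot> \<delta> = Var z" using d[rule_format, of z] by (simp add: \<sigma>0_def)
    qed
    have gn: "list_all good (X # Y # rest)" using gX gY gr by simp
    have FF: "FF (X # Y # rest) = FF Gs" using Gs G1 by simp
    have "R = map solve (map (\<lambda>t. t \<cdot> \<theta>) (X # Y # rest))" using R c2 Bs XY by simp
    moreover have "corr P Q (FF (map (\<lambda>t. t \<cdot> \<theta>) (X # Y # rest)))"
      unfolding FF_subst[OF gn] FF using corr_subst[OF cr d2] .
    ultimately have "SS P Q R" unfolding SS_def using good_map_subst[OF gn] by blast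
    then show ?thesis by blast
  next
    case c3
    have vc: "vars_clause (rename_clause \<rho> c) = {a, b}" using c3 by (auto simp: vars_clause_def)
    have nab: "a \<notin> vars_list (FF Gs)" "b \<notin> vars_list (FF Gs)" using disj vc vM by auto
    have G1t: "G1 \<cdot> \<theta> = \<theta> a" using u c3 by simp
    have R3: "R = Fn ClauseS [\<theta> a, \<theta> b] # solve (\<theta> b) # map solve (map (\<lambda>t. t \<cdot> \<theta>) rest)"
      using R c3 Bs by simp
    consider (t) "G1 = Fn TrueS []" | (cm) "\<exists>X Y. G1 = Fn Comma [X, Y]" | (us) "uh G1"
      using good_cases[OF g1] by blast
    then show ?thesis
    proof cases
      case t
      then have "\<theta> a = Fn TrueS []" using G1t by simp
      then have "DD R" unfolding DD_def using R3 by blast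
      then show ?thesis by blast
    next
      case cm
      then obtain X Y where "G1 = Fn Comma [X, Y]" by blast
      then have "\<theta> a = Fn Comma [X \<cdot> \<theta>, Y \<cdot> \<theta>]" using G1t by simp
      then have "DD R" unfolding DD_def using R3 by blast
      then show ?thesis by blast
    next
      case us
      define \<sigma>0 where "\<sigma>0 = Var(a := G1)"
      have G1s: "G1 \<cdot> \<sigma>0 = G1"
        using nab vM2 by (intro subst_id_outside) (auto simp: \<sigma>0_def)
      have "A \<cdot> \<sigma>0 = fst (rename_clause \<rho> c) \<cdot> \<sigma>0"
        using A G1s c3 by (simp add: \<sigma>0_def)
      then obtain \<delta> where d: "\<forall>z. \<sigma>0 z = \<theta> z \<cdot> \<delta>" using mgu_gen[OF m] by blast
      have d2: "\<forall>z\<in>vars_list (FF Gs). \<theta> z \<cdot> \<delta> = Var z"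
      proof
        fix z assume "z \<in> vars_list (FF Gs)"
        then have "z \<noteq> a" using nab by auto
        then show "\<theta> z \<cdot> \<delta> = Var z" using d[rule_format, of z] by (simp add: \<sigma>0_def)
      qed
      have "\<theta> b \<cdot> \<delta> = Var b" using d[rule_format, of b] ab' by (simp add: \<sigma>0_def)
      from var_back[OF this] obtain b' where b': "\<theta> b = Var b'" "\<delta> b' = Var b" by blast
      have fr: "b' \<notin> (\<Union>z\<in>vars_list (FF Gs). vars (\<theta> z))"
        using fresh_after[OF d2 b'(2) nab(2)] .
      have "R = Fn ClauseS [G1 \<cdot> \<theta>, Var b'] # solve (Var b') # map solve (map (\<lambda>t. t \<cdot> \<theta>) rest)"
        using R3 G1t b' by simp
      moreover have "uh (G1 \<cdot> \<theta>)" using us uh_subst by blast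
      moreover have "list_all good (map (\<lambda>t. t \<cdot> \<theta>) rest)" using good_map_subst[OF gr] .
      moreover have "b' \<notin> vars (G1 \<cdot> \<theta>)" using fr vM2 by (auto simp: vars_subst)
      moreover have "b' \<notin> vars_list (FF (map (\<lambda>t. t \<cdot> \<theta>) rest))"
        using fr vM2 by (auto simp: FF_subst[OF gr] vars_list_map)
      moreover have "corr P Q (G1 \<cdot> \<theta> # FF (map (\<lambda>t. t \<cdot> \<theta>) rest))"
      proof -
        have "FF Gs = G1 # FF rest" using Gs us by (simp add: uh_flat)
        then have "corr P Q (map (\<lambda>t. t \<cdot> \<theta>) (G1 # FF rest))" using corr_subst[OF cr d2] by simp
        then show ?thesis by (simp add: FF_subst[OF gr])
      qed
      ultimately have "CC P Q R" unfolding CC_def by blast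
      then show ?thesis by blast
    qed
  qed
qed


lemma subst_outside_b: "b \<notin> vars t \<Longrightarrow> t \<cdot> (\<lambda>z. if z = b then s else \<theta> z \<cdot> \<sigma>) = t \<cdot> \<theta> \<cdot> \<sigma>"
  by (simp add: subst_comp subst_cong)

lemma CC_step:
  assumes "CC P Q M" "infinite (UNIV :: 'v set)" "definite_program P"
    and "ld_step (M0 x y \<union> ce P) M R"
  shows "SS P Q (R :: ('f sym, 'v) trm list)"
proof -
  obtain A b Gs where M: "M = Fn ClauseS [A, Var b] # solve (Var b) # map solve Gs" and uA: "uh A"
    and g: "list_all good Gs" and bA: "b \<notin> vars A" and bG: "b \<notin> vars_list (FF Gs)"
    and cr: "corr P Q (A # FF Gs)"
    using assms(1) unfolding CC_def by blast
  obtain A0 Bs c \<rho> \<theta> where MA: "M = A0 # Bs" and c: "c \<in> M0 x y \<union> ce P" and r: "bij \<rho>"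
    and disj: "vars_clause (rename_clause \<rho> c) \<inter> vars_list M = {}"
    and m: "mgu \<theta> A0 (fst (rename_clause \<rho> c))"
    and R: "R = map (\<lambda>B. B \<cdot> \<theta>) (snd (rename_clause \<rho> c) @ Bs)"
    using assms(4) unfolding ld_step_def by blast
  have A0: "A0 = Fn ClauseS [A, Var b]" and Bs: "Bs = solve (Var b) # map solve Gs" using M MA by auto
  have u: "Fn ClauseS [A, Var b] \<cdot> \<theta> = fst (rename_clause \<rho> c) \<cdot> \<theta>" using mgu_unif[OF m] A0 by simp
  have cce: "c \<in> ce P"
  proof (rule ccontr)
    assume "c \<notin> ce P"
    then have "c \<in> M0 x y" using c by blast
    from M0_cases[OF this, of \<rho>] show False using u by auto
  qed
  obtain H B where hb: "(H, B) \<in> P" and rc: "rename_clause \<rho> c =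
     (Fn ClauseS [H \<cdot> (Var \<circ> \<rho>), enc_body (map (\<lambda>t. t \<cdot> (Var \<circ> \<rho>)) B)], [])"
    using ce_cases[OF cce] by blast
  define H' where "H' = H \<cdot> (Var \<circ> \<rho>)"
  define B' where "B' = map (\<lambda>t. t \<cdot> (Var \<circ> \<rho>)) B"
  have rc': "rename_clause \<rho> c = (Fn ClauseS [H', enc_body B'], [])" using rc by (simp add: H'_def B'_def)
  have rc0: "rename_clause \<rho> (H, B) = (H', B')" by (simp add: rename_clause_def H'_def B'_def)
  have vM: "vars_list M = vars A \<union> {b} \<union> vars_list (FF Gs)" using M vars_FF[OF g] by auto
  have vc: "vars_clause (rename_clause \<rho> c) = vars H' \<union> vars_list B'" using rc' by (simp add: vars_clause_def vars_enc)
  have d1: "(vars H' \<union> vars_list B') \<inter> (vars A \<union> vars_list (FF Gs)) = {}" using disj vc vM by blast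
  have bH: "b \<notin> vars H'" "b \<notin> vars_list B'" using disj vc vM by blast+
  have uAH: "A \<cdot> \<theta> = H' \<cdot> \<theta>" and ub: "\<theta> b = enc_body B' \<cdot> \<theta>" using u rc' by auto
  have uB': "\<forall>t\<in>set B'. uh t" using prog_uh[OF assms(3) hb] uh_subst by (auto simp: B'_def)
  define E' where "E' = map (\<lambda>t. t \<cdot> \<theta>) B'"
  have uE': "\<forall>t\<in>set E'. uh t" using uB' uh_subst by (auto simp: E'_def)
  have gE: "good (enc_body E')" and fE: "flat (enc_body E') = E'" using enc_good[OF uE'] by auto
  have R': "R = map solve (enc_body E' # map (\<lambda>t. t \<cdot> \<theta>) Gs)" using R rc' Bs ub by (simp add: enc_subst E'_def)
  have gn: "list_all good (enc_body E' # map (\<lambda>t. t \<cdot> \<theta>) Gs)" using gE good_map_subst[OF g] by simp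
  have FFn: "FF (enc_body E' # map (\<lambda>t. t \<cdot> \<theta>) Gs) = map (\<lambda>t. t \<cdot> \<theta>) (B' @ FF Gs)"
    by (simp only: FF_simps fE FF_subst[OF g]) (simp add: E'_def)
  obtain h :: "'v \<Rightarrow> 'v" and uu where h: "inj h" "uu \<notin> range h" using inj_not_surj[OF assms(2)] by blast
  define \<theta>' where "\<theta>' = (\<lambda>z. if z = b then Var uu else \<theta> z \<cdot> (Var \<circ> h))"
  have key: "t \<cdot> \<theta>' = t \<cdot> \<theta> \<cdot> (Var \<circ> h)" if "b \<notin> vars t" for t
    using subst_outside_b[OF that] unfolding \<theta>'_def .
  have m': "mgu \<theta>' A H'"
    unfolding mgu_def unifier_def
  proof (intro conjI allI impI)
    show "A \<cdot> \<theta>' = H' \<cdot> \<theta>'" using key[OF bA] key[OF bH(1)] uAH by simp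
  next
    fix \<tau> assume ut: "A \<cdot> \<tau> = H' \<cdot> \<tau>"
    define \<tau>' where "\<tau>' = \<tau>(b := enc_body B' \<cdot> \<tau>)"
    have e1: "A \<cdot> \<tau>' = A \<cdot> \<tau>" using bA by (intro subst_cong) (auto simp: \<tau>'_def)
    have e2: "H' \<cdot> \<tau>' = H' \<cdot> \<tau>" using bH(1) by (intro subst_cong) (auto simp: \<tau>'_def)
    have e3: "enc_body B' \<cdot> \<tau>' = enc_body B' \<cdot> \<tau>" using bH(2) by (intro subst_cong) (auto simp: \<tau>'_def vars_enc)
    have "A0 \<cdot> \<tau>' = fst (rename_clause \<rho> c) \<cdot> \<tau>'"
      using A0 rc' e1 e2 e3 ut by (simp add: \<tau>'_def)
    then obtain \<delta> where d: "\<forall>z. \<tau>' z = \<theta> z \<cdot> \<delta>" using mgu_gen[OF m] by blast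
    define \<delta>' where "\<delta>' = (\<lambda>w. if w = uu then \<tau> b else \<delta> (inv h w))"
    have "\<tau> z = \<theta>' z \<cdot> \<delta>'" for z
    proof (cases "z = b")
      case True
      then show ?thesis by (simp add: \<theta>'_def \<delta>'_def)
    next
      case False
      have hx: "\<delta>' (h w) = \<delta> w" for w
      proof -
        have "h w \<noteq> uu" using h(2) by auto
        then show ?thesis using h(1) by (simp add: \<delta>'_def)
      qed
      have "\<theta>' z \<cdot> \<delta>' = \<theta> z \<cdot> (\<lambda>w. \<delta>' (h w))" using False by (simp add: \<theta>'_def subst_comp)
      also have "\<dots> = \<theta> z \<cdot> \<delta>" using hx by simp
      also have "\<dots> = \<tau>' z" using d by simp
      also have "\<dots> = \<tau> z" using False by (simp add: \<tau>'_def)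
      finally show ?thesis by simp
    qed
    then show "\<exists>\<delta>. \<forall>x. \<tau> x = \<theta>' x \<cdot> \<delta>" by blast
  qed
  have step: "ld_step P (A # FF Gs) (map (\<lambda>t. t \<cdot> \<theta>') (B' @ FF Gs))"
    unfolding ld_step_def
    apply (rule exI[of _ A])
    apply (rule exI[of _ "FF Gs"])
    apply (rule exI[of _ "(H, B)"])
    apply (rule exI[of _ \<rho>])
    apply (rule exI[of _ \<theta>'])
    using hb r d1 m' rc0 by (simp add: vars_clause_def Int_commute)
  have eq: "map (\<lambda>t. t \<cdot> \<theta>') (B' @ FF Gs) = map (\<lambda>t. t \<cdot> (Var \<circ> h)) (map (\<lambda>t. t \<cdot> \<theta>) (B' @ FF Gs))"
  proof -
    have "\<forall>t\<in>set (B' @ FF Gs). b \<notin> vars t" using bH(2) bG by (auto simp: vars_list_def)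
    then show ?thesis using key by simp
  qed
  have "corr P Q (map (\<lambda>t. t \<cdot> (Var \<circ> h)) (map (\<lambda>t. t \<cdot> \<theta>) (B' @ FF Gs)))"
    using corr_step[OF cr step] unfolding eq .
  then have "corr P Q (map (\<lambda>t. t \<cdot> \<theta>) (B' @ FF Gs))" using corr_inj h(1) by blast
  then show ?thesis unfolding SS_def using R' gn FFn by metis
qed


lemma BE_uh:
  assumes "definite_program P" "Q \<in> BE P"
  shows "uh Q"
proof -
  obtain p ts where Q: "Q = Fn p ts" and pp: "(p, length ts) \<in> preds P" using assms(2) unfolding BE_def by blast
  obtain c A where c: "c \<in> P" "A \<in> clause_atoms c" "(p, length ts) \<in> pred_of A"
    using pp unfolding preds_def by blast
  have "user_atom A" using assms(1) c(1,2) unfolding definite_program_def by blast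
  then have "uh A" by (rule user_atom_uh)
  then obtain q us where "A = Fn (Usr q) us" unfolding uh_def by blast
  then have "p = Usr q" using c(3) by simp
  then show ?thesis using Q by (simp add: uh_def)
qed

lemma meta_inv:
  assumes "(ld_step (M0 x y \<union> ce P))\<^sup>*\<^sup>* [solve Q] M" "x \<noteq> y" "infinite (UNIV :: 'v set)"
    "definite_program P" "uh Q"
  shows "SS P Q M \<or> CC P Q M \<or> DD (M :: ('f sym, 'v) trm list)"
  using assms(1)
proof (induction rule: rtranclp_induct)
  case base
  have "corr P Q [Q]" unfolding corr_def
    apply (rule exI[of _ "[Q]"])
    apply (rule exI[of _ id])
    by simp
  then have "corr P Q (FF [Q])" using uh_flat[OF assms(5)] by simp
  moreover have "list_all good [Q]" using uh_good[OF assms(5)] by simp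
  ultimately have "SS P Q [solve Q]" unfolding SS_def
    apply (intro exI[of _ "[Q]"])
    by simp
  then show ?case by blast
next
  case (step M R)
  from step.IH show ?case
  proof (elim disjE)
    assume "SS P Q M" then show ?thesis by (rule SS_step[OF _ assms(2) step.hyps(2)])
  next
    assume "CC P Q M" then have "SS P Q R" by (rule CC_step[OF _ assms(3,4) step.hyps(2)])
    then show ?thesis by blast
  next
    assume "DD M" then have False by (rule DD_step[OF _ assms(4) step.hyps(2)])
    then show ?thesis by blast
  qed
qed

lemma variant_solve: "variant (solve A) B \<Longrightarrow> \<exists>\<rho>. bij \<rho> \<and> B = solve (A \<cdot> (Var \<circ> \<rho>))"
  unfolding variant_def by auto

lemma part2:
  assumes "x \<noteq> y" "infinite (UNIV :: 'v set)" "definite_program P" "Q \<in> BE P"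
    and "solve A \<in> Call (M0 x y \<union> ce P) {[solve Q]}" "A \<in> BE P"
  shows "A \<in> Call P {[Q :: ('f sym, 'v) trm]}"
proof -
  obtain B Bs where r: "(ld_step (M0 x y \<union> ce P))\<^sup>*\<^sup>* [solve Q] (B # Bs)" and v: "variant (solve A) B"
    using assms(5) unfolding Call_def by blast
  obtain \<rho> where \<rho>: "bij \<rho>" "B = solve (A \<cdot> (Var \<circ> \<rho>))" using variant_solve[OF v] by blast
  have uQ: "uh Q" using BE_uh assms(3,4) by blast
  have uA: "uh A" using BE_uh assms(3,6) by blast
  have I: "SS P Q (B # Bs) \<or> CC P Q (B # Bs) \<or> DD (B # Bs)" using meta_inv[OF r assms(1,2,3) uQ] .
  have "\<not> CC P Q (B # Bs)" using \<rho>(2) unfolding CC_def by simp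
  moreover have "\<not> DD (B # Bs)" using \<rho>(2) unfolding DD_def by simp
  ultimately have "SS P Q (B # Bs)" using I by blast
  then obtain Gs where "B # Bs = map solve Gs \<and> list_all good Gs \<and> corr P Q (FF Gs)"
    unfolding SS_def by (rule exE)
  then have Gs: "B # Bs = map solve Gs" and g: "list_all good Gs" and cr: "corr P Q (FF Gs)" by blast+
  obtain G1 rest where Gs1: "Gs = G1 # rest" using Gs by (cases Gs) auto
  have G1: "G1 = A \<cdot> (Var \<circ> \<rho>)" using Gs Gs1 \<rho>(2) by simp
  have uG1: "uh G1" using G1 uA uh_subst by blast
  obtain Qo \<pi> where q: "(ld_step P)\<^sup>*\<^sup>* [Q] Qo" "bij \<pi>" "map (\<lambda>t. t \<cdot> (Var \<circ> \<pi>)) (FF Gs) = Qo"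
    using cr unfolding corr_def by blast
  have "Qo = G1 \<cdot> (Var \<circ> \<pi>) # map (\<lambda>t. t \<cdot> (Var \<circ> \<pi>)) (FF rest)"
    using q(3) Gs1 uh_flat[OF uG1] by simp
  moreover have "variant A (G1 \<cdot> (Var \<circ> \<pi>))"
    unfolding variant_def G1 ren_comp using bij_comp[OF \<rho>(1) q(2)] by blast
  ultimately show ?thesis unfolding Call_def using q(1) by blast
qed


lemma fresh2:
  assumes "infinite (UNIV :: 'v set)" "finite (S :: 'v set)"
  shows "\<exists>a b. a \<noteq> b \<and> a \<notin> S \<and> b \<notin> S"
proof -
  obtain a where a: "a \<notin> S" using ex_new_if_finite[OF assms] by blast
  obtain b where b: "b \<notin> insert a S" using ex_new_if_finite[OF assms(1)] assms(2) by blast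
  show ?thesis using a b by blast
qed

lemma ren2:
  fixes x y a b :: 'v
  assumes "x \<noteq> y" "a \<noteq> b"
  shows "\<exists>\<rho>. bij \<rho> \<and> \<rho> x = a \<and> \<rho> y = b"
proof -
  define f where "f z = (if z = x then a else b)" for z
  have "inj_on f {x, y}" using assms by (auto simp: f_def inj_on_def)
  then obtain \<rho> where "bij \<rho>" "\<forall>w\<in>{x, y}. \<rho> w = f w" using inj_extend[of "{x, y}" f] by blast
  then show ?thesis using assms by (auto simp: f_def)
qed

lemma mgu_refl: "mgu Var s s"
  unfolding mgu_def unifier_def by auto

lemma mgu_v2:
  assumes "a \<noteq> b" "a \<notin> vars X" "a \<notin> vars Y" "b \<notin> vars X" "b \<notin> vars Y"
  shows "mgu (Var(a := X, b := Y)) (solve (Fn Comma [X, Y])) (solve (Fn Comma [Var a, Var b]))"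
proof -
  have X: "X \<cdot> Var(a := X, b := Y) = X" using assms by (intro subst_id_outside) auto
  have Y: "Y \<cdot> Var(a := X, b := Y) = Y" using assms by (intro subst_id_outside) auto
  show ?thesis unfolding mgu_def unifier_def
  proof (intro conjI allI impI)
    show "solve (Fn Comma [X, Y]) \<cdot> Var(a := X, b := Y) = solve (Fn Comma [Var a, Var b]) \<cdot> Var(a := X, b := Y)"
      using X Y assms(1) by simp
  next
    fix \<tau> assume "solve (Fn Comma [X, Y]) \<cdot> \<tau> = solve (Fn Comma [Var a, Var b]) \<cdot> \<tau>"
    then have "X \<cdot> \<tau> = \<tau> a" "Y \<cdot> \<tau> = \<tau> b" by auto
    then have "\<forall>z. \<tau> z = (Var(a := X, b := Y)) z \<cdot> \<tau>" by auto
    then show "\<exists>\<delta>. \<forall>z. \<tau> z = (Var(a := X, b := Y)) z \<cdot> \<delta>" by blast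
  qed
qed

lemma mgu_v1:
  assumes "a \<notin> vars A"
  shows "mgu (Var(a := A)) (solve A) (solve (Var a))"
proof -
  have X: "A \<cdot> Var(a := A) = A" using assms by (intro subst_id_outside) auto
  show ?thesis unfolding mgu_def unifier_def
  proof (intro conjI allI impI)
    show "solve A \<cdot> Var(a := A) = solve (Var a) \<cdot> Var(a := A)" using X by simp
  next
    fix \<tau> assume "solve A \<cdot> \<tau> = solve (Var a) \<cdot> \<tau>"
    then have "A \<cdot> \<tau> = \<tau> a" by auto
    then have "\<forall>z. \<tau> z = (Var(a := A)) z \<cdot> \<tau>" by auto
    then show "\<exists>\<delta>. \<forall>z. \<tau> z = (Var(a := A)) z \<cdot> \<delta>" by blast
  qed
qed

lemma mgu_cl:
  assumes "b \<notin> vars A" "b \<notin> vars H" "b \<notin> vars E" "mgu \<theta> A H"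
  shows "mgu (\<theta>(b := E \<cdot> \<theta>)) (Fn ClauseS [A, Var b]) (Fn ClauseS [H, E])"
proof -
  have eA: "A \<cdot> \<theta>(b := E \<cdot> \<theta>) = A \<cdot> \<theta>" using assms(1) by (intro subst_cong) auto
  have eH: "H \<cdot> \<theta>(b := E \<cdot> \<theta>) = H \<cdot> \<theta>" using assms(2) by (intro subst_cong) auto
  have eE: "E \<cdot> \<theta>(b := E \<cdot> \<theta>) = E \<cdot> \<theta>" using assms(3) by (intro subst_cong) auto
  show ?thesis unfolding mgu_def unifier_def
  proof (intro conjI allI impI)
    show "Fn ClauseS [A, Var b] \<cdot> \<theta>(b := E \<cdot> \<theta>) = Fn ClauseS [H, E] \<cdot> \<theta>(b := E \<cdot> \<theta>)"
      using eA eH eE mgu_unif[OF assms(4)] by simp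
  next
    fix \<tau> assume "Fn ClauseS [A, Var b] \<cdot> \<tau> = Fn ClauseS [H, E] \<cdot> \<tau>"
    then have u: "A \<cdot> \<tau> = H \<cdot> \<tau>" "\<tau> b = E \<cdot> \<tau>" by auto
    obtain \<delta> where d: "\<forall>x. \<tau> x = \<theta> x \<cdot> \<delta>" using mgu_gen[OF assms(4) u(1)] by blast
    have "\<tau> = (\<lambda>x. \<theta> x \<cdot> \<delta>)" using d by auto
    then have "E \<cdot> \<tau> = E \<cdot> \<theta> \<cdot> \<delta>" by (simp add: subst_comp)
    then have "\<forall>z. \<tau> z = (\<theta>(b := E \<cdot> \<theta>)) z \<cdot> \<delta>" using d u(2) by auto
    then show "\<exists>\<delta>. \<forall>z. \<tau> z = (\<theta>(b := E \<cdot> \<theta>)) z \<cdot> \<delta>" by blast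
  qed
qed

lemma mstep1: "ld_step (M0 x y \<union> ce P) (solve (Fn TrueS []) # Bs) Bs"
  unfolding ld_step_def
  apply (rule exI[of _ "solve (Fn TrueS [])"])
  apply (rule exI[of _ Bs])
  apply (rule exI[of _ "(solve (Fn TrueS []), [])"])
  apply (rule exI[of _ id])
  apply (rule exI[of _ Var])
  by (simp add: M0_def rename_clause_def vars_clause_def mgu_refl)

lemma mstep2:
  assumes "x \<noteq> y" "infinite (UNIV :: 'v set)"
  shows "ld_step (M0 x y \<union> ce P) (solve (Fn Comma [X, Y]) # Bs) (solve X # solve Y # (Bs :: ('f sym, 'v) trm list))"
proof -
  obtain a b where ab: "a \<noteq> b" "a \<notin> vars X \<union> vars Y \<union> vars_list Bs" "b \<notin> vars X \<union> vars Y \<union> vars_list Bs"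
    using fresh2[OF assms(2), of "vars X \<union> vars Y \<union> vars_list Bs"] by auto
  obtain \<rho> where r: "bij \<rho>" "\<rho> x = a" "\<rho> y = b" using ren2[OF assms(1) ab(1)] by blast
  have c: "(solve (Fn Comma [Var x, Var y]), [solve (Var x), solve (Var y)]) \<in> M0 x y \<union> ce P"
    by (simp add: M0_def)
  have rc: "rename_clause \<rho> (solve (Fn Comma [Var x, Var y]), [solve (Var x), solve (Var y)])
     = (solve (Fn Comma [Var a, Var b]), [solve (Var a), solve (Var b)])"
    using r by (simp add: rename_clause_def)
  have m: "mgu (Var(a := X, b := Y)) (solve (Fn Comma [X, Y])) (solve (Fn Comma [Var a, Var b]))"
    using ab by (intro mgu_v2) auto
  have "map (\<lambda>t. t \<cdot> Var(a := X, b := Y)) Bs = map (\<lambda>t. t \<cdot> Var) Bs"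
    using ab by (intro map_subst_cong) auto
  then have Bs: "map (\<lambda>t. t \<cdot> Var(a := X, b := Y)) Bs = Bs" by simp
  show ?thesis unfolding ld_step_def
    apply (rule exI[of _ "solve (Fn Comma [X, Y])"])
    apply (rule exI[of _ Bs])
    apply (rule exI[of _ "(solve (Fn Comma [Var x, Var y]), [solve (Var x), solve (Var y)])"])
    apply (rule exI[of _ \<rho>])
    apply (rule exI[of _ "Var(a := X, b := Y)"])
    apply (unfold rc)
    using c r(1) rc m Bs ab by (auto simp: vars_clause_def)
qed

lemma mstep34:
  assumes "x \<noteq> y" "infinite (UNIV :: 'v set)" "(H, B) \<in> P" "bij \<rho>"
    and disj: "vars_clause (rename_clause \<rho> (H, B)) \<inter> (vars A \<union> vars_list Bs) = {}"
    and m: "mgu \<theta> A (fst (rename_clause \<rho> (H, B)))"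
  shows "(ld_step (M0 x y \<union> ce P))\<^sup>*\<^sup>* (solve A # Bs)
     (solve (enc_body (map (\<lambda>t. t \<cdot> \<theta>) (snd (rename_clause \<rho> (H, B))))) # map (\<lambda>t. t \<cdot> \<theta>) (Bs :: ('f sym, 'v) trm list))"
proof -
  define H' where "H' = fst (rename_clause \<rho> (H, B))"
  define B' where "B' = snd (rename_clause \<rho> (H, B))"
  have vc: "vars_clause (rename_clause \<rho> (H, B)) = vars H' \<union> vars_list B'"
    by (simp add: vars_clause_def H'_def B'_def)
  define S where "S = vars A \<union> vars_list Bs \<union> vars H' \<union> vars_list B'"
  obtain a b where ab: "a \<noteq> b" "a \<notin> S" "b \<notin> S"
    using fresh2[OF assms(2), of S] by (auto simp: S_def)
  obtain \<rho>1 where r: "bij \<rho>1" "\<rho>1 x = a" "\<rho>1 y = b" using ren2[OF assms(1) ab(1)] by blast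
  have c3: "(solve (Var x), [Fn ClauseS [Var x, Var y], solve (Var y)]) \<in> M0 x y \<union> ce P"
    by (simp add: M0_def)
  have rc3: "rename_clause \<rho>1 (solve (Var x), [Fn ClauseS [Var x, Var y], solve (Var y)])
     = (solve (Var a), [Fn ClauseS [Var a, Var b], solve (Var b)])"
    using r by (simp add: rename_clause_def)
  have m1: "mgu (Var(a := A)) (solve A) (solve (Var a))" using ab by (intro mgu_v1) (auto simp: S_def)
  have "map (\<lambda>t. t \<cdot> Var(a := A)) Bs = map (\<lambda>t. t \<cdot> Var) Bs"
    using ab by (intro map_subst_cong) (auto simp: S_def)
  then have Bs1: "map (\<lambda>t. t \<cdot> Var(a := A)) Bs = Bs" by simp
  have s1: "ld_step (M0 x y \<union> ce P) (solve A # Bs) (Fn ClauseS [A, Var b] # solve (Var b) # Bs)"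
    unfolding ld_step_def
    apply (rule exI[of _ "solve A"])
    apply (rule exI[of _ Bs])
    apply (rule exI[of _ "(solve (Var x), [Fn ClauseS [Var x, Var y], solve (Var y)])"])
    apply (rule exI[of _ \<rho>1])
    apply (rule exI[of _ "Var(a := A)"])
    apply (unfold rc3)
    using c3 r(1) rc3 m1 Bs1 ab by (auto simp: vars_clause_def S_def)
  define E where "E = enc_body B'"
  have cc: "(Fn ClauseS [H, enc_body B], []) \<in> M0 x y \<union> ce P" using assms(3) by (auto simp: ce_def)
  have rcc: "rename_clause \<rho> (Fn ClauseS [H, enc_body B], []) = (Fn ClauseS [H', E], [])"
    by (simp add: rename_clause_def H'_def B'_def E_def enc_subst)
  have vE: "vars E = vars_list B'" by (simp add: E_def vars_enc)
  have m2: "mgu (\<theta>(b := E \<cdot> \<theta>)) (Fn ClauseS [A, Var b]) (Fn ClauseS [H', E])"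
    using ab vE m by (intro mgu_cl) (auto simp: S_def H'_def)
  have Bs2: "map (\<lambda>t. t \<cdot> \<theta>(b := E \<cdot> \<theta>)) Bs = map (\<lambda>t. t \<cdot> \<theta>) Bs"
    using ab by (intro map_subst_cong) (auto simp: S_def)
  have d2: "vars_clause (rename_clause \<rho> (Fn ClauseS [H, enc_body B], [])) \<inter>
      vars_list (Fn ClauseS [A, Var b] # solve (Var b) # Bs) = {}"
    using disj vc ab vE unfolding rcc by (auto simp: vars_clause_def S_def)
  have s2: "ld_step (M0 x y \<union> ce P) (Fn ClauseS [A, Var b] # solve (Var b) # Bs)
       (solve (E \<cdot> \<theta>) # map (\<lambda>t. t \<cdot> \<theta>) Bs)"
    unfolding ld_step_def
    apply (rule exI[of _ "Fn ClauseS [A, Var b]"])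
    apply (rule exI[of _ "solve (Var b) # Bs"])
    apply (rule exI[of _ "(Fn ClauseS [H, enc_body B], [])"])
    apply (rule exI[of _ \<rho>])
    apply (rule exI[of _ "\<theta>(b := E \<cdot> \<theta>)"])
    apply (unfold rcc)
    using cc assms(4) rcc m2 Bs2 d2 by simp
  have eq: "enc_body (map (\<lambda>t. t \<cdot> \<theta>) (snd (rename_clause \<rho> (H, B)))) = E \<cdot> \<theta>"
    by (simp add: E_def B'_def enc_subst)
  have s1': "(ld_step (M0 x y \<union> ce P))\<^sup>*\<^sup>* (solve A # Bs) (Fn ClauseS [A, Var b] # solve (Var b) # Bs)"
    using s1 by (rule r_into_rtranclp[where r = "ld_step (M0 x y \<union> ce P)"])
  show ?thesis unfolding eq using s1' s2 by (rule rtranclp.rtrancl_into_rtrancl)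
qed


lemma expose:
  assumes "x \<noteq> y" "infinite (UNIV :: 'v set)"
  shows "list_all good Gs \<Longrightarrow> FF Gs = A # Os \<Longrightarrow> \<exists>rest.
     (ld_step (M0 x y \<union> ce P))\<^sup>*\<^sup>* (map solve Gs) (solve A # map solve rest)
     \<and> list_all good rest \<and> FF rest = Os \<and> uh (A :: ('f sym, 'v) trm)"
proof (induction "sum_list (map size Gs)" arbitrary: Gs rule: less_induct)
  case less
  obtain G1 r where Gs: "Gs = G1 # r" using less.prems(2) by (cases Gs) auto
  have g1: "good G1" and gr: "list_all good r" using less.prems(1) Gs by auto
  consider (t) "G1 = Fn TrueS []" | (cm) "\<exists>X Y. G1 = Fn Comma [X, Y] \<and> good X \<and> good Y" | (us) "uh G1"
    using good_cases[OF g1] by blast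
  then show ?case
  proof cases
    case t
    have F: "FF r = A # Os" using less.prems(2) Gs t by simp
    have lt: "sum_list (map size r) < sum_list (map size Gs)" using Gs t by simp
    obtain rest where IH: "(ld_step (M0 x y \<union> ce P))\<^sup>*\<^sup>* (map solve r) (solve A # map solve rest)"
      "list_all good rest" "FF rest = Os" "uh A"
      using less.hyps[OF lt gr F] by blast
    have "ld_step (M0 x y \<union> ce P) (map solve Gs) (map solve r)" using Gs t mstep1 by simp
    then have "(ld_step (M0 x y \<union> ce P))\<^sup>*\<^sup>* (map solve Gs) (solve A # map solve rest)"
      using IH(1) by (rule converse_rtranclp_into_rtranclp)
    then show ?thesis using IH by blast
  next
    case cm
    then obtain X Y where G1: "G1 = Fn Comma [X, Y]" and gX: "good X" and gY: "good Y" by blast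
    have gn: "list_all good (X # Y # r)" using gX gY gr by simp
    have F: "FF (X # Y # r) = A # Os" using less.prems(2) Gs G1 by simp
    have lt: "sum_list (map size (X # Y # r)) < sum_list (map size Gs)" using Gs G1 by simp
    obtain rest where IH: "(ld_step (M0 x y \<union> ce P))\<^sup>*\<^sup>* (map solve (X # Y # r)) (solve A # map solve rest)"
      "list_all good rest" "FF rest = Os" "uh A"
      using less.hyps[OF lt gn F] by blast
    have "ld_step (M0 x y \<union> ce P) (map solve Gs) (map solve (X # Y # r))"
      using Gs G1 mstep2[OF assms] by simp
    then have "(ld_step (M0 x y \<union> ce P))\<^sup>*\<^sup>* (map solve Gs) (solve A # map solve rest)"
      using IH(1) by (rule converse_rtranclp_into_rtranclp)
    then show ?thesis using IH by blast
  next
    case us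
    have "G1 = A" "FF r = Os" using less.prems(2) Gs uh_flat[OF us] by simp_all
    then show ?thesis using Gs gr us by (intro exI[of _ r]) simp
  qed
qed

lemma obj_to_meta:
  assumes "(ld_step P)\<^sup>*\<^sup>* [Q] Qo" "x \<noteq> y" "infinite (UNIV :: 'v set)" "definite_program P" "uh Q"
  shows "\<exists>Gs. (ld_step (M0 x y \<union> ce P))\<^sup>*\<^sup>* [solve Q] (map solve Gs) \<and> list_all good Gs
     \<and> FF Gs = (Qo :: ('f sym, 'v) trm list)"
  using assms(1)
proof (induction rule: rtranclp_induct)
  case base
  show ?case using uh_good[OF assms(5)] uh_flat[OF assms(5)] by (intro exI[of _ "[Q]"]) simp
next
  case (step Qo R)
  obtain Gs where G: "(ld_step (M0 x y \<union> ce P))\<^sup>*\<^sup>* [solve Q] (map solve Gs)" "list_all good Gs" "FF Gs = Qo"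
    using step.IH by blast
  obtain A Os c \<rho> \<theta> where Qo: "Qo = A # Os" and c: "c \<in> P" and r: "bij \<rho>"
    and disj: "vars_clause (rename_clause \<rho> c) \<inter> vars_list Qo = {}"
    and m: "mgu \<theta> A (fst (rename_clause \<rho> c))"
    and R: "R = map (\<lambda>B. B \<cdot> \<theta>) (snd (rename_clause \<rho> c) @ Os)"
    using step.hyps(2) unfolding ld_step_def by blast
  obtain H B where cHB: "c = (H, B)" by (cases c)
  have FG: "FF Gs = A # Os" using G(3) Qo by simp
  from expose[OF assms(2,3) G(2) FG] obtain rest where e: "(ld_step (M0 x y \<union> ce P))\<^sup>*\<^sup>* (map solve Gs) (solve A # map solve rest)"
    "list_all good rest" "FF rest = Os" "uh A" by blast
  have vr: "vars_list (map solve rest) = vars_list Os" using vars_FF[OF e(2)] e(3) by simp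
  have disj': "vars_clause (rename_clause \<rho> (H, B)) \<inter> (vars A \<union> vars_list (map solve rest)) = {}"
    using disj Qo vr cHB by simp
  define B' where "B' = snd (rename_clause \<rho> (H, B))"
  have s: "(ld_step (M0 x y \<union> ce P))\<^sup>*\<^sup>* (solve A # map solve rest)
     (solve (enc_body (map (\<lambda>t. t \<cdot> \<theta>) B')) # map (\<lambda>t. t \<cdot> \<theta>) (map solve rest))"
    unfolding B'_def using mstep34[OF assms(2,3) c[unfolded cHB] r disj'] m cHB by simp
  have uB': "\<forall>t\<in>set (map (\<lambda>t. t \<cdot> \<theta>) B'). uh t"
    using prog_uh[OF assms(4) c[unfolded cHB]] by (auto simp: B'_def rename_clause_def intro!: uh_subst)
  have gE: "good (enc_body (map (\<lambda>t. t \<cdot> \<theta>) B'))" and fE: "flat (enc_body (map (\<lambda>t. t \<cdot> \<theta>) B')) = map (\<lambda>t. t \<cdot> \<theta>) B'"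
    using enc_good[OF uB'] by auto
  define Gs' where "Gs' = enc_body (map (\<lambda>t. t \<cdot> \<theta>) B') # map (\<lambda>t. t \<cdot> \<theta>) rest"
  have "(ld_step (M0 x y \<union> ce P))\<^sup>*\<^sup>* [solve Q] (map solve Gs')"
    using rtranclp_trans[OF rtranclp_trans[OF G(1) e(1)] s] unfolding Gs'_def map_solve_subst by simp
  moreover have "list_all good Gs'" using gE good_map_subst[OF e(2)] by (simp add: Gs'_def)
  moreover have "FF Gs' = R"
  proof -
    have "FF Gs' = map (\<lambda>t. t \<cdot> \<theta>) B' @ FF (map (\<lambda>t. t \<cdot> \<theta>) rest)"
      unfolding Gs'_def FF_simps fE ..
    also have "\<dots> = R" using R cHB e(3) by (simp add: FF_subst[OF e(2)] B'_def)
    finally show ?thesis .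
  qed
  ultimately show ?case by blast
qed

lemma part1:
  assumes "x \<noteq> y" "infinite (UNIV :: 'v set)" "definite_program P" "Q \<in> BE P"
    and "A \<in> Call P {[Q :: ('f sym, 'v) trm]}"
  shows "solve A \<in> Call (M0 x y \<union> ce P) {[solve Q]}"
proof -
  obtain B Bs where r: "(ld_step P)\<^sup>*\<^sup>* [Q] (B # Bs)" and v: "variant A B"
    using assms(5) unfolding Call_def by blast
  have uQ: "uh Q" using BE_uh assms(3,4) by blast
  obtain Gs where G: "(ld_step (M0 x y \<union> ce P))\<^sup>*\<^sup>* [solve Q] (map solve Gs)" "list_all good Gs" "FF Gs = B # Bs"
    using obj_to_meta[OF r assms(1,2,3) uQ] by blast
  obtain rest where e: "(ld_step (M0 x y \<union> ce P))\<^sup>*\<^sup>* (map solve Gs) (solve B # map solve rest)"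
    using expose[OF assms(1,2) G(2,3)] by blast
  have r2: "(ld_step (M0 x y \<union> ce P))\<^sup>*\<^sup>* [solve Q] (solve B # map solve rest)"
    using rtranclp_trans[OF G(1) e] .
  have "variant (solve A) (solve B)" using v unfolding variant_def by auto
  then show ?thesis unfolding Call_def using r2 by blast
qed

theorem mainTheorem1:
  fixes P :: "('f sym, 'v) program" and Q :: "('f sym, 'v) trm" and x y :: 'v
  assumes "infinite (UNIV :: 'v set)"
    and "x \<noteq> y"
    and "definite_program P"
    and "Q \<in> BE P"
  shows "(\<forall>A \<in> Call P {[Q]}. \<exists>A'. solve A' \<in> Call (M0 x y \<union> ce P) {[solve Q]} \<and> variant A A')
       \<and> (\<forall>A. solve A \<in> Call (M0 x y \<union> ce P) {[solve Q]} \<and> A \<in> BE P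
              \<longrightarrow> (\<exists>A' \<in> Call P {[Q]}. variant A A'))"
proof -
  have vid: "variant A A" for A :: "('f sym, 'v) trm"
    unfolding variant_def by (intro exI[of _ id]) simp
  show ?thesis
  proof (intro conjI allI ballI impI)
    fix A assume "A \<in> Call P {[Q]}"
    then have "solve A \<in> Call (M0 x y \<union> ce P) {[solve Q]}" by (rule part1[OF assms(2,1,3,4)])
    then show "\<exists>A'. solve A' \<in> Call (M0 x y \<union> ce P) {[solve Q]} \<and> variant A A'" using vid by blast
  next
    fix A assume "solve A \<in> Call (M0 x y \<union> ce P) {[solve Q]} \<and> A \<in> BE P"
    then have "A \<in> Call P {[Q]}" using part2[OF assms(2,1,3,4)] by (elim conjE)
    then show "\<exists>A' \<in> Call P {[Q]}. variant A A'" using vid by blast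
  qed
qed

end
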